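(* Let $N\ge1$, let $T$ be the rooted binary tree and $T_N$ the grafted binary tree. For every automorphism $g\in Aut(T)$ there exists an automorphism $\widehat g\in Aut(T_N)$ such that the homeomorphism of $\partial T$ induced by $g$ and the homeomorphism of $\partial T_N$ induced by $\widehat g$ are topologically conjugate.
   Context: The rooted binary tree $T$ has levels $V_i$, $|V_i|=2^i$, vertices labelled by words in $\{0,1\}^i$, with $w_1\cdots w_i$ joined to $w_1\cdots w_i0$ and $w_1\cdots w_i1$; $\partial T=\{0,1\}^{\mathbb N}$. The grafted binary tree $T_N$ has levels $V_0$ (the root), $V_1$ with $2^N$ vertices labelled $0,\ldots,2^N-1$ all joined to the root, and for $i\ge1$ each vertex $w_1\cdots w_i$ of $V_i$ joined to the two vertices $w_1\cdots w_i0$, $w_1\cdots w_i1$ of $V_{i+1}$; $\partial T_N=\{0,\ldots,2^N-1\}\times\prod_{i\ge2}\{0,1\}$ with the product topology. An automorphism of a tree is a bijection of vertices preserving adjacency (hence levels); it induces a homeomorphism of the boundary. *)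

theory Defs
  imports "HOL-Analysis.Analysis"
begin

text \<open>Vertices of both trees are words (lists of naturals); a vertex of level i is a word
of length i.  Letters of the binary tree are 0,1.\<close>

definition bin_tree :: "nat list set" where
  "bin_tree = {w. set w \<subseteq> {0, 1}}"

definition grafted_tree :: "nat \<Rightarrow> nat list set" where
  "grafted_tree N = {[]} \<union> {w. w \<noteq> [] \<and> hd w < 2 ^ N \<and> set (tl w) \<subseteq> {0, 1}}"

definition tree_edge :: "nat list \<Rightarrow> nat list \<Rightarrow> bool" where
  "tree_edge u v \<longleftrightarrow> (\<exists>a. v = u @ [a]) \<or> (\<exists>a. u = v @ [a])"

definition tree_aut :: "nat list set \<Rightarrow> (nat list \<Rightarrow> nat list) \<Rightarrow> bool" where
  "tree_aut V f \<longleftrightarrow> bij_betw f V V \<and>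
     (\<forall>u\<in>V. \<forall>v\<in>V. tree_edge u v \<longleftrightarrow> tree_edge (f u) (f v))"

text \<open>Boundaries: infinite rays, as sequences of letters (with the product topology of
the discrete space nat, restricted to the boundary set).\<close>
definition bin_bdry :: "(nat \<Rightarrow> nat) set" where
  "bin_bdry = {x. \<forall>i. x i \<in> {0, 1}}"

definition grafted_bdry :: "nat \<Rightarrow> (nat \<Rightarrow> nat) set" where
  "grafted_bdry N = {x. x 0 < 2 ^ N \<and> (\<forall>i\<ge>1. x i \<in> {0, 1})}"

definition induced_bdry :: "(nat list \<Rightarrow> nat list) \<Rightarrow> (nat \<Rightarrow> nat) \<Rightarrow> (nat \<Rightarrow> nat)" where
  "induced_bdry f x = (\<lambda>i. f (map x [0..<Suc i]) ! i)"

end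

theory Submission
  imports Defs
begin

definition enc :: "nat \<Rightarrow> (nat \<Rightarrow> nat) \<Rightarrow> nat" where
  "enc n x = (\<Sum>j<n. x j * 2 ^ j)"

lemma enc_less: "(\<And>j. j < n \<Longrightarrow> x j \<le> 1) \<Longrightarrow> enc n x < 2 ^ n"
proof (induction n)
  case 0 then show ?case by (simp add: enc_def)
next
  case (Suc n)
  have "enc n x < 2 ^ n" using Suc by auto
  moreover have "x n \<le> 1" using Suc by auto
  ultimately have "enc n x + x n * 2 ^ n < 2 ^ n + 1 * 2 ^ n"
    by (metis add_less_le_mono mult_le_mono1)
  then show ?case by (simp add: enc_def)
qed

lemma enc_bit: "(\<And>j. j < n \<Longrightarrow> x j \<le> 1) \<Longrightarrow> i < n \<Longrightarrow> enc n x div 2 ^ i mod 2 = x i"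
proof (induction n)
  case 0 then show ?case by simp
next
  case (Suc n)
  have e: "enc (Suc n) x = enc n x + x n * 2 ^ n" by (simp add: enc_def)
  show ?case
  proof (cases "i < n")
    case True
    have "2 ^ n = 2 ^ i * (2::nat) ^ (n - i)" using True by (simp add: power_add[symmetric])
    then have "enc (Suc n) x = enc n x + (x n * 2 ^ (n - i)) * 2 ^ i"
      using e by (simp add: mult_ac)
    then have "enc (Suc n) x div 2 ^ i = enc n x div 2 ^ i + x n * 2 ^ (n - i)"
      by (simp only: div_mult_self2) simp
    moreover have "x n * (2::nat) ^ (n - i) = (x n * 2 ^ (n - i - 1)) * 2" using True
      by (metis Suc_diff_Suc diff_Suc_1 mult.assoc power_Suc2 zero_less_diff)
    ultimately have "enc (Suc n) x div 2 ^ i = enc n x div 2 ^ i + (x n * 2 ^ (n - i - 1)) * 2"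
      by simp
    moreover have "(enc n x div 2 ^ i + (x n * 2 ^ (n - i - 1)) * 2) mod 2 = enc n x div 2 ^ i mod 2"
      by (rule mod_mult_self1)
    ultimately have "enc (Suc n) x div 2 ^ i mod 2 = enc n x div 2 ^ i mod 2"
      by simp
    then show ?thesis using Suc True by simp
  next
    case False
    then have "i = n" using Suc by simp
    have "enc n x < 2 ^ n" using Suc by (intro enc_less) auto
    then have "enc (Suc n) x div 2 ^ n = x n" using e by simp
    moreover have "x n \<le> 1" using Suc by simp
    ultimately show ?thesis using \<open>i = n\<close> by (cases "x n") auto
  qed
qed

lemma enc_bits: "enc n (\<lambda>j. y div 2 ^ j mod 2) = y mod 2 ^ n"
proof (induction n)
  case 0 then show ?case by (simp add: enc_def)
next
  case (Suc n)
  have "enc (Suc n) (\<lambda>j. y div 2 ^ j mod 2) = y mod 2 ^ n + (y div 2 ^ n mod 2) * 2 ^ n"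
    using Suc by (simp add: enc_def)
  also have "\<dots> = y mod 2 ^ Suc n"
    by (simp only: power_Suc2 mod_mult2_eq) (simp add: mult.commute)
  finally show ?case .
qed


lemma bin_tree_iff: "w \<in> bin_tree \<longleftrightarrow> set w \<subseteq> {0,1}"
  by (simp add: bin_tree_def)

lemma tree_edge_sym: "tree_edge u v = tree_edge v u"
  unfolding tree_edge_def by blast

definition nbrs :: "nat list \<Rightarrow> nat list set" where
  "nbrs w = {v \<in> bin_tree. tree_edge w v}"

lemma aut_nbrs:
  assumes "tree_aut bin_tree f" "w \<in> bin_tree"
  shows "nbrs (f w) = f ` nbrs w"
proof
  have b: "bij_betw f bin_tree bin_tree" and e: "\<forall>u\<in>bin_tree. \<forall>v\<in>bin_tree. tree_edge u v \<longleftrightarrow> tree_edge (f u) (f v)"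
    using assms unfolding tree_aut_def by auto
  show "nbrs (f w) \<subseteq> f ` nbrs w"
  proof
    fix v assume v: "v \<in> nbrs (f w)"
    then have "v \<in> bin_tree" by (simp add: nbrs_def)
    then obtain v' where v': "v' \<in> bin_tree" "v = f v'" using b by (metis bij_betw_imp_surj_on imageE)
    then have "tree_edge w v'" using e v assms(2) by (simp add: nbrs_def)
    then show "v \<in> f ` nbrs w" using v' by (auto simp: nbrs_def)
  qed
  show "f ` nbrs w \<subseteq> nbrs (f w)"
    using e b assms(2) by (auto simp: nbrs_def bij_betw_def)
qed

lemma nbrs_root: "nbrs [] = {[0],[1]}"
  by (auto simp: nbrs_def tree_edge_def bin_tree_def)

lemma aut_root:
  assumes "tree_aut bin_tree f"
  shows "f [] = []"
proof (rule ccontr)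
  assume ne: "f [] \<noteq> []"
  let ?r = "f []"
  have rb: "?r \<in> bin_tree" using assms unfolding tree_aut_def bij_betw_def
    by (auto simp: bin_tree_def)
  have "nbrs ?r = f ` {[0],[1]}" using aut_nbrs[OF assms, of "[]"] nbrs_root
    by (simp add: bin_tree_def)
  then have c: "card (nbrs ?r) \<le> 2"
    using card_image_le[of "{[0::nat],[1]}" f] by simp
  have sub: "{?r @ [0], ?r @ [1], butlast ?r} \<subseteq> nbrs ?r"
  proof -
    have "?r @ [0] \<in> nbrs ?r" "?r @ [1] \<in> nbrs ?r" using rb
      by (auto simp: nbrs_def tree_edge_def bin_tree_def)
    moreover have "butlast ?r \<in> bin_tree" using rb
      by (auto simp: bin_tree_def dest: in_set_butlastD)
    moreover have "tree_edge ?r (butlast ?r)"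
      unfolding tree_edge_def using append_butlast_last_id[OF ne] by metis
    ultimately show ?thesis by (simp add: nbrs_def)
  qed
  have "card {?r @ [0], ?r @ [1], butlast ?r} = 3"
  proof -
    have "butlast ?r \<noteq> ?r @ [0]" "butlast ?r \<noteq> ?r @ [1]"
      by (metis Suc_n_not_le_n diff_le_self length_append_singleton length_butlast)+
    then show ?thesis by simp
  qed
  moreover have "finite (nbrs ?r)"
    using \<open>nbrs ?r = f ` {[0],[1]}\<close> by simp
  ultimately have "3 \<le> card (nbrs ?r)" using sub by (metis card_mono)
  then show False using c by simp
qed

lemma aut_inv:
  assumes "tree_aut bin_tree f"
  shows "tree_aut bin_tree (inv_into bin_tree f)"
proof -
  have b: "bij_betw f bin_tree bin_tree" and e: "\<forall>u\<in>bin_tree. \<forall>v\<in>bin_tree. tree_edge u v \<longleftrightarrow> tree_edge (f u) (f v)"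
    using assms unfolding tree_aut_def by auto
  have bi: "bij_betw (inv_into bin_tree f) bin_tree bin_tree" using b by (rule bij_betw_inv_into)
  have "\<forall>u\<in>bin_tree. \<forall>v\<in>bin_tree. tree_edge u v \<longleftrightarrow> tree_edge (inv_into bin_tree f u) (inv_into bin_tree f v)"
  proof (intro ballI)
    fix u v assume u: "u \<in> bin_tree" and v: "v \<in> bin_tree"
    have "inv_into bin_tree f u \<in> bin_tree" "inv_into bin_tree f v \<in> bin_tree"
      using bi u v by (auto simp: bij_betw_def)
    moreover have "f (inv_into bin_tree f u) = u" "f (inv_into bin_tree f v) = v"
      using b u v by (auto simp: bij_betw_def f_inv_into_f)
    ultimately show "tree_edge u v \<longleftrightarrow> tree_edge (inv_into bin_tree f u) (inv_into bin_tree f v)"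
      using e by metis
  qed
  then show ?thesis using bi by (simp add: tree_aut_def)
qed

lemma aut_length_aux:
  "\<forall>f. tree_aut bin_tree f \<longrightarrow> (\<forall>w\<in>bin_tree. length w = n \<longrightarrow> length (f w) = n)"
proof (induction n rule: less_induct)
  case (less n)
  show ?case
  proof (intro allI impI ballI)
    fix f w assume f: "tree_aut bin_tree f" and w: "w \<in> bin_tree" and lw: "length w = n"
    have b: "bij_betw f bin_tree bin_tree" and e: "\<forall>u\<in>bin_tree. \<forall>v\<in>bin_tree. tree_edge u v \<longleftrightarrow> tree_edge (f u) (f v)"
      using f unfolding tree_aut_def by auto
    show "length (f w) = n"
    proof (cases "w = []")
      case True then show ?thesis using aut_root[OF f] lw by simp
    next
      case False
      then obtain v a where wv: "w = v @ [a]" by (metis append_butlast_last_id)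
      have vb: "v \<in> bin_tree" using w wv by (simp add: bin_tree_def)
      have lv: "length v = n - 1" "n \<ge> 1" using lw wv by auto
      have lfv: "length (f v) = n - 1" using less lv f vb by (metis diff_less zero_less_one less_le_trans)
      have "tree_edge v w" using wv by (simp add: tree_edge_def)
      then have "tree_edge (f v) (f w)" using e vb w by blast
      then consider (up) b where "f w = f v @ [b]" | (down) b where "f v = f w @ [b]"
        unfolding tree_edge_def by blast
      then show ?thesis
      proof cases
        case up then show ?thesis using lfv lv by simp
      next
        case down
        have lfw: "length (f w) = n - 2" "n \<ge> 2" using down lfv lv
          by auto
        have fwb: "f w \<in> bin_tree" using b w by (auto simp: bij_betw_def)
        have "inv_into bin_tree f (f w) = w" using b w by (simp add: bij_betw_def)
        moreover have "length (inv_into bin_tree f (f w)) = n - 2"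
          using less[rule_format, of "n - 2" "inv_into bin_tree f" "f w"] aut_inv[OF f] fwb lfw by simp
        ultimately show ?thesis using lw lfw by simp
      qed
    qed
  qed
qed

lemma aut_length: "tree_aut bin_tree f \<Longrightarrow> w \<in> bin_tree \<Longrightarrow> length (f w) = length w"
  using aut_length_aux by blast


definition good :: "(nat list \<Rightarrow> nat list) \<Rightarrow> bool" where
  "good f \<longleftrightarrow> (\<forall>u\<in>bin_tree. f u \<in> bin_tree \<and> length (f u) = length u) \<and>
     (\<forall>u a. u @ [a] \<in> bin_tree \<longrightarrow> (\<exists>b. f (u @ [a]) = f u @ [b]))"

lemma aut_good:
  assumes f: "tree_aut bin_tree f"
  shows "good f"
  unfolding good_def
proof (intro conjI ballI allI impI)
  have b: "bij_betw f bin_tree bin_tree" and e: "\<forall>u\<in>bin_tree. \<forall>v\<in>bin_tree. tree_edge u v \<longleftrightarrow> tree_edge (f u) (f v)"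
    using f unfolding tree_aut_def by auto
  fix u assume "u \<in> bin_tree"
  then show "f u \<in> bin_tree" "length (f u) = length u"
    using b aut_length[OF f] by (auto simp: bij_betw_def)
next
  have b: "bij_betw f bin_tree bin_tree" and e: "\<forall>u\<in>bin_tree. \<forall>v\<in>bin_tree. tree_edge u v \<longleftrightarrow> tree_edge (f u) (f v)"
    using f unfolding tree_aut_def by auto
  fix u a assume ua: "u @ [a] \<in> bin_tree"
  then have ub: "u \<in> bin_tree" by (simp add: bin_tree_def)
  have "tree_edge u (u @ [a])" by (simp add: tree_edge_def)
  then have "tree_edge (f u) (f (u @ [a]))" using e ua ub by blast
  moreover have "length (f (u @ [a])) = Suc (length (f u))"
    using aut_length[OF f ua] aut_length[OF f ub] by simp
  ultimately show "\<exists>b. f (u @ [a]) = f u @ [b]"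
    unfolding tree_edge_def by auto
qed

lemma good_take:
  assumes g: "good f"
  shows "w \<in> bin_tree \<Longrightarrow> k \<le> length w \<Longrightarrow> take k (f w) = f (take k w)"
proof (induction w arbitrary: k rule: rev_induct)
  case Nil
  have "length (f []) = 0" using g Nil.prems unfolding good_def by force
  then show ?case by simp
next
  case (snoc a v)
  have vb: "v \<in> bin_tree" using snoc.prems by (simp add: bin_tree_def)
  obtain b where fb: "f (v @ [a]) = f v @ [b]" using g snoc.prems unfolding good_def by blast
  have lv: "length (f v) = length v" using g vb unfolding good_def by blast
  show ?case
  proof (cases "k \<le> length v")
    case True
    then show ?thesis using fb lv snoc.IH[OF vb True] by simp
  next
    case False
    then have "k = length (v @ [a])" using snoc.prems by simp
    then show ?thesis using fb lv by simp
  qed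
qed

lemma good_nth:
  assumes g: "good f" and x: "x \<in> bin_bdry" and jm: "j < m"
  shows "f (map x [0..<m]) ! j = induced_bdry f x j"
proof -
  have xi: "\<And>i. x i \<in> {0,1}" using x unfolding bin_bdry_def by blast
  have "set (map x [0..<m]) \<subseteq> {0,1}"
  proof
    fix v assume "v \<in> set (map x [0..<m])"
    then obtain i where "v = x i" by auto
    then show "v \<in> {0,1}" using xi by simp
  qed
  then have wb: "map x [0..<m] \<in> bin_tree" unfolding bin_tree_def by simp
  have l: "length (f (map x [0..<m])) = m" using g wb unfolding good_def by simp
  have "f (map x [0..<m]) ! j = take (Suc j) (f (map x [0..<m])) ! j"
    using jm by simp
  also have "\<dots> = f (take (Suc j) (map x [0..<m])) ! j"
    using good_take[OF g wb, of "Suc j"] jm by simp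
  also have "take (Suc j) (map x [0..<m]) = map x [0..<Suc j]"
    using jm by (simp add: take_map)
  finally show ?thesis by (simp add: induced_bdry_def)
qed


definition Dm :: "nat \<Rightarrow> nat list \<Rightarrow> nat list" where
  "Dm N w = map (\<lambda>j. hd w div 2 ^ j mod 2) [0..<N] @ tl w"

definition Em :: "nat \<Rightarrow> nat list \<Rightarrow> nat list" where
  "Em N u = enc N (\<lambda>j. u ! j) # drop N u"

definition ghat :: "nat \<Rightarrow> (nat list \<Rightarrow> nat list) \<Rightarrow> nat list \<Rightarrow> nat list" where
  "ghat N f w = (if w = [] then [] else Em N (f (Dm N w)))"

lemma mod2_01: "(a::nat) mod 2 \<in> {0,1}"
  by auto

lemma L1:
  assumes "w \<in> grafted_tree N" "w \<noteq> []"
  shows "Dm N w \<in> bin_tree" "length (Dm N w) = N + (length w - 1)"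
proof -
  have "set (tl w) \<subseteq> {0,1}" using assms by (simp add: grafted_tree_def)
  moreover have "set (map (\<lambda>j. hd w div 2 ^ j mod 2) [0..<N]) \<subseteq> {0,1}"
    using mod2_01 by auto
  ultimately show "Dm N w \<in> bin_tree" by (simp add: Dm_def bin_tree_def)
  show "length (Dm N w) = N + (length w - 1)" using assms(2) by (cases w) (simp_all add: Dm_def)
qed

lemma bin_nth_le1: "u \<in> bin_tree \<Longrightarrow> j < length u \<Longrightarrow> u ! j \<le> 1"
  unfolding bin_tree_def using nth_mem by fastforce

lemma L2:
  assumes "u \<in> bin_tree" "N \<le> length u"
  shows "Em N u \<in> grafted_tree N" "Em N u \<noteq> []" "length (Em N u) = length u - N + 1"
proof -
  have "enc N (\<lambda>j. u ! j) < 2 ^ N"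
    using assms by (intro enc_less bin_nth_le1) auto
  moreover have "set (drop N u) \<subseteq> {0,1}" using assms
    by (simp add: bin_tree_def) (meson set_drop_subset subset_trans)
  ultimately show "Em N u \<in> grafted_tree N" by (simp add: Em_def grafted_tree_def)
  show "Em N u \<noteq> []" by (simp add: Em_def)
  show "length (Em N u) = length u - N + 1" by (simp add: Em_def)
qed

lemma L3:
  assumes "w \<in> grafted_tree N" "w \<noteq> []"
  shows "Em N (Dm N w) = w"
proof -
  have hw: "hd w < 2 ^ N" using assms by (simp add: grafted_tree_def)
  have "enc N (\<lambda>j. Dm N w ! j) = enc N (\<lambda>j. hd w div 2 ^ j mod 2)"
    unfolding enc_def by (intro sum.cong) (auto simp: Dm_def nth_append)
  also have "\<dots> = hd w" using enc_bits hw by simp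
  finally show ?thesis using assms(2) by (simp add: Em_def Dm_def)
qed

lemma L4:
  assumes "u \<in> bin_tree" "N \<le> length u"
  shows "Dm N (Em N u) = u"
proof -
  have "map (\<lambda>j. enc N (\<lambda>j. u ! j) div 2 ^ j mod 2) [0..<N] = map (\<lambda>j. u ! j) [0..<N]"
    using assms by (intro map_cong refl enc_bit bin_nth_le1) auto
  also have "\<dots> = take N u" using assms(2)
    by (metis map_nth min.absorb1 take_map take_upt add_0 length_map)
  finally show ?thesis by (simp add: Dm_def Em_def)
qed

lemma L5: "w \<noteq> [] \<Longrightarrow> Dm N (w @ [a]) = Dm N w @ [a]"
  by (simp add: Dm_def)

lemma L6: "N \<le> length u \<Longrightarrow> Em N (u @ [b]) = Em N u @ [b]"
proof -
  assume a: "N \<le> length u"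
  have "enc N (\<lambda>j. (u @ [b]) ! j) = enc N (\<lambda>j. u ! j)"
    unfolding enc_def using a by (intro sum.cong) (auto simp: nth_append)
  then show ?thesis using a by (simp add: Em_def)
qed

lemma G1:
  assumes g: "good f" and w: "w \<in> grafted_tree N"
  shows "ghat N f w \<in> grafted_tree N" "length (ghat N f w) = length w"
proof -
  show "ghat N f w \<in> grafted_tree N"
  proof (cases "w = []")
    case True then show ?thesis by (simp add: ghat_def grafted_tree_def)
  next
    case False
    have "f (Dm N w) \<in> bin_tree" "length (f (Dm N w)) = N + (length w - 1)"
      using g L1[OF w False] unfolding good_def by auto
    moreover have le: "N \<le> length (f (Dm N w))" using calculation(2) by simp
    ultimately show ?thesis using L2[of "f (Dm N w)" N] False by (simp add: ghat_def)
  qed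
  show "length (ghat N f w) = length w"
  proof (cases "w = []")
    case True then show ?thesis by (simp add: ghat_def)
  next
    case False
    have "f (Dm N w) \<in> bin_tree" "length (f (Dm N w)) = N + (length w - 1)"
      using g L1[OF w False] unfolding good_def by auto
    moreover have le: "N \<le> length (f (Dm N w))" using calculation(2) by simp
    ultimately show ?thesis using L2(3)[of "f (Dm N w)" N] False by (cases w) (simp_all add: ghat_def)
  qed
qed

lemma G2:
  assumes g: "good f" and inv: "\<forall>u\<in>bin_tree. f' (f u) = u" and w: "w \<in> grafted_tree N"
  shows "ghat N f' (ghat N f w) = w"
proof (cases "w = []")
  case True then show ?thesis by (simp add: ghat_def)
next
  case False
  have fb: "f (Dm N w) \<in> bin_tree" "length (f (Dm N w)) = N + (length w - 1)"
    using g L1[OF w False] unfolding good_def by auto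
  have ne: "Em N (f (Dm N w)) \<noteq> []" by (simp add: Em_def)
  have "ghat N f' (ghat N f w) = Em N (f' (Dm N (Em N (f (Dm N w)))))"
    using False ne by (simp add: ghat_def)
  also have "Dm N (Em N (f (Dm N w))) = f (Dm N w)"
    using fb(1) by (intro L4) (simp_all only: fb(2) le_add1)
  also have "f' (f (Dm N w)) = Dm N w" using inv L1[OF w False] by blast
  finally show ?thesis using L3[OF w False] by simp
qed

lemma G3:
  assumes g: "good f" and u: "u \<in> grafted_tree N" and v: "v \<in> grafted_tree N"
    and e: "tree_edge u v"
  shows "tree_edge (ghat N f u) (ghat N f v)"
proof -
  have main: "tree_edge (ghat N f u) (ghat N f (u @ [a]))"
    if u: "u \<in> grafted_tree N" and ua: "u @ [a] \<in> grafted_tree N" for u a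
  proof (cases "u = []")
    case True
    have "length (ghat N f (u @ [a])) = 1" using G1(2)[OF g ua] True by simp
    then obtain c where "ghat N f (u @ [a]) = [c]"
      by (metis One_nat_def length_0_conv length_Suc_conv)
    then show ?thesis using True by (simp add: ghat_def tree_edge_def)
  next
    case False
    have db: "Dm N (u @ [a]) \<in> bin_tree" using L1[OF ua] by simp
    have eq: "Dm N (u @ [a]) = Dm N u @ [a]" using L5[OF False] .
    obtain b where fb: "f (Dm N u @ [a]) = f (Dm N u) @ [b]"
      using g db eq unfolding good_def by metis
    have "length (f (Dm N u)) = N + (length u - 1)" "f (Dm N u) \<in> bin_tree"
      using g L1[OF u False] unfolding good_def by auto
    then have "N \<le> length (f (Dm N u))" using False by (cases u) auto
    then have "ghat N f (u @ [a]) = ghat N f u @ [b]"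
      using False fb eq L6 by (simp add: ghat_def)
    then show ?thesis by (simp add: tree_edge_def)
  qed
  from e consider (a) a where "v = u @ [a]" | (b) a where "u = v @ [a]"
    unfolding tree_edge_def by blast
  then show ?thesis
  proof cases
    case a then show ?thesis using main u v by blast
  next
    case b then show ?thesis using main u v tree_edge_sym by metis
  qed
qed


definition hmap :: "nat \<Rightarrow> (nat \<Rightarrow> nat) \<Rightarrow> (nat \<Rightarrow> nat)" where
  "hmap N x = (\<lambda>i. if i = 0 then enc N x else x (N + i - 1))"

definition hinv :: "nat \<Rightarrow> (nat \<Rightarrow> nat) \<Rightarrow> (nat \<Rightarrow> nat)" where
  "hinv N y = (\<lambda>i. if i < N then y 0 div 2 ^ i mod 2 else y (i + 1 - N))"

lemma bdry_le1: "x \<in> bin_bdry \<Longrightarrow> x j \<le> 1"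
proof -
  assume "x \<in> bin_bdry"
  then have "x j \<in> {0,1}" by (simp add: bin_bdry_def)
  then show "x j \<le> 1" by auto
qed

lemma cont_coord: "continuous_on S (\<lambda>x::nat\<Rightarrow>nat. x j)"
proof -
  have "continuous_on UNIV (\<lambda>x::nat\<Rightarrow>nat. x j)" by (rule continuous_on_product_coordinates)
  then show ?thesis by (rule continuous_on_subset) simp
qed

lemma cont_enc: "continuous_on S (\<lambda>x. enc N x)"
  unfolding enc_def
  by (intro continuous_on_sum continuous_on_mult' cont_coord continuous_on_const)

lemma homeo:
  assumes "N \<ge> 1"
  shows "homeomorphic_map (top_of_set bin_bdry) (top_of_set (grafted_bdry N)) (hmap N)"
  unfolding homeomorphic_map_maps
proof (intro exI[of _ "hinv N"])
  have into1: "hmap N ` bin_bdry \<subseteq> grafted_bdry N"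
  proof
    fix y assume "y \<in> hmap N ` bin_bdry"
    then obtain x where x: "x \<in> bin_bdry" "y = hmap N x" by auto
    have "enc N x < 2 ^ N" using bdry_le1[OF x(1)] by (intro enc_less)
    moreover have "\<forall>i. x i \<in> {0,1}" using x(1) by (simp add: bin_bdry_def)
    ultimately show "y \<in> grafted_bdry N" using x(2) by (simp add: grafted_bdry_def hmap_def)
  qed
  have into2: "hinv N ` grafted_bdry N \<subseteq> bin_bdry"
  proof
    fix x assume "x \<in> hinv N ` grafted_bdry N"
    then obtain y where y: "y \<in> grafted_bdry N" "x = hinv N y" by auto
    have "\<forall>i\<ge>1. y i \<in> {0,1}" using y(1) by (simp add: grafted_bdry_def)
    then show "x \<in> bin_bdry" using y(2) by (auto simp: bin_bdry_def hinv_def)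
  qed
  have c1: "continuous_on bin_bdry (hmap N)"
    unfolding hmap_def
  proof (intro continuous_on_coordinatewise_then_product)
    fix i show "continuous_on bin_bdry (\<lambda>x. if i = 0 then enc N x else x (N + i - 1))"
      by (cases "i = 0") (simp_all add: cont_enc cont_coord)
  qed
  have c2: "continuous_on (grafted_bdry N) (hinv N)"
    unfolding hinv_def
  proof (intro continuous_on_coordinatewise_then_product)
    fix i show "continuous_on (grafted_bdry N) (\<lambda>y. if i < N then y 0 div 2 ^ i mod 2 else y (i + 1 - N))"
    proof (cases "i < N")
      case True
      have "continuous_on (grafted_bdry N) (\<lambda>y. (\<lambda>n::nat. n div 2 ^ i mod 2) (y 0))"
        by (rule continuous_on_compose2[OF Topological_Spaces.continuous_on_discrete cont_coord]) auto
      then show ?thesis using True by simp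
    next
      case False then show ?thesis by (simp add: cont_coord)
    qed
  qed
  have inv1: "\<forall>x\<in>bin_bdry. hinv N (hmap N x) = x"
  proof
    fix x assume x: "x \<in> bin_bdry"
    show "hinv N (hmap N x) = x"
    proof
      fix i show "hinv N (hmap N x) i = x i"
        using enc_bit[of N x i, OF bdry_le1[OF x]] assms by (auto simp: hinv_def hmap_def)
    qed
  qed
  have inv2: "\<forall>y\<in>grafted_bdry N. hmap N (hinv N y) = y"
  proof
    fix y assume y: "y \<in> grafted_bdry N"
    show "hmap N (hinv N y) = y"
    proof
      fix i show "hmap N (hinv N y) i = y i"
      proof (cases "i = 0")
        case True
        have "enc N (hinv N y) = enc N (\<lambda>j. y 0 div 2 ^ j mod 2)"
          unfolding enc_def by (intro sum.cong) (auto simp: hinv_def)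
        also have "\<dots> = y 0" using enc_bits y by (simp add: grafted_bdry_def)
        finally show ?thesis using True by (simp add: hmap_def)
      next
        case False then show ?thesis using assms by (simp add: hmap_def hinv_def)
      qed
    qed
  qed
  show "homeomorphic_maps (top_of_set bin_bdry) (top_of_set (grafted_bdry N)) (hmap N) (hinv N)"
    unfolding homeomorphic_maps_def
  proof (intro conjI)
    show "continuous_map (top_of_set bin_bdry) (top_of_set (grafted_bdry N)) (hmap N)"
      unfolding continuous_map_in_subtopology continuous_map_iff_continuous
      using c1 into1 by (simp add: image_subset_iff_funcset)
    show "continuous_map (top_of_set (grafted_bdry N)) (top_of_set bin_bdry) (hinv N)"
      unfolding continuous_map_in_subtopology continuous_map_iff_continuous
      using c2 into2 by (simp add: image_subset_iff_funcset)
  qed (use inv1 inv2 in simp_all)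
qed


lemma map_bin: assumes x: "x \<in> bin_bdry" shows "map x [0..<m] \<in> bin_tree"
proof -
  have xi: "\<And>i. x i \<in> {0,1}" using x unfolding bin_bdry_def by blast
  have "set (map x [0..<m]) \<subseteq> {0,1}"
  proof
    fix v assume "v \<in> set (map x [0..<m])"
    then obtain i where "v = x i" by auto
    then show "v \<in> {0,1}" using xi by simp
  qed
  then show ?thesis unfolding bin_tree_def by simp
qed

theorem lemma2p5:
  fixes N :: nat and g :: "nat list \<Rightarrow> nat list"
  assumes "N \<ge> 1" and "tree_aut bin_tree g"
  shows "\<exists>gh. tree_aut (grafted_tree N) gh \<and>
           (\<exists>h. homeomorphic_map (top_of_set bin_bdry) (top_of_set (grafted_bdry N)) h \<and>
                (\<forall>x\<in>bin_bdry. h (induced_bdry g x) = induced_bdry gh (h x)))"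
proof (intro exI conjI)
  let ?g' = "inv_into bin_tree g"
  have b: "bij_betw g bin_tree bin_tree" using assms(2) by (simp add: tree_aut_def)
  have gg: "good g" using aut_good[OF assms(2)] .
  have gg': "good ?g'" using aut_good[OF aut_inv[OF assms(2)]] .
  have i1: "\<forall>u\<in>bin_tree. ?g' (g u) = u" using b by (simp add: bij_betw_def)
  have i2: "\<forall>u\<in>bin_tree. g (?g' u) = u" using b by (simp add: bij_betw_def f_inv_into_f)
  let ?G = "grafted_tree N"
  show "tree_aut ?G (ghat N g)"
    unfolding tree_aut_def
  proof (intro conjI ballI)
    show "bij_betw (ghat N g) ?G ?G"
      by (rule bij_betw_byWitness[where f' = "ghat N ?g'"])
        (use G2[OF gg i1] G2[OF gg' i2] G1(1)[OF gg] G1(1)[OF gg'] in auto)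
    fix u v assume u: "u \<in> ?G" and v: "v \<in> ?G"
    show "tree_edge u v \<longleftrightarrow> tree_edge (ghat N g u) (ghat N g v)"
    proof
      assume "tree_edge u v" then show "tree_edge (ghat N g u) (ghat N g v)"
        using G3[OF gg u v] by simp
    next
      assume "tree_edge (ghat N g u) (ghat N g v)"
      then have "tree_edge (ghat N ?g' (ghat N g u)) (ghat N ?g' (ghat N g v))"
        using G3[OF gg' G1(1)[OF gg u] G1(1)[OF gg v]] by simp
      then show "tree_edge u v" using G2[OF gg i1 u] G2[OF gg i1 v] by simp
    qed
  qed
  show "homeomorphic_map (top_of_set bin_bdry) (top_of_set (grafted_bdry N)) (hmap N)"
    using homeo[OF assms(1)] .
  show "\<forall>x\<in>bin_bdry. hmap N (induced_bdry g x) = induced_bdry (ghat N g) (hmap N x)"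
  proof
    fix x assume x: "x \<in> bin_bdry"
    show "hmap N (induced_bdry g x) = induced_bdry (ghat N g) (hmap N x)"
    proof
      fix i
      let ?w = "map (hmap N x) [0..<Suc i]"
      have w: "?w = enc N x # map (\<lambda>j. x (N + j)) [0..<i]"
        by (simp add: hmap_def map_upt_Suc del: upt_Suc)
      have "Dm N ?w = map x [0..<N] @ map (\<lambda>j. x (N + j)) [0..<i]"
        unfolding w Dm_def using enc_bit[of N x, OF bdry_le1[OF x]] by simp
      also have "\<dots> = map x [0..<N + i]"
        by (rule nth_equalityI) (auto simp: nth_append)
      finally have D: "Dm N ?w = map x [0..<N + i]" .
      let ?H = "g (map x [0..<N + i])"
      have ind: "induced_bdry (ghat N g) (hmap N x) i = Em N ?H ! i"
        unfolding induced_bdry_def ghat_def using D by simp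
      have lH: "length ?H = N + i"
        using gg map_bin[OF x, of "N + i"] unfolding good_def by simp
      show "hmap N (induced_bdry g x) i = induced_bdry (ghat N g) (hmap N x) i"
      proof (cases "i = 0")
        case True
        have "enc N (\<lambda>j. ?H ! j) = enc N (induced_bdry g x)"
          unfolding enc_def using True
          by (intro sum.cong refl) (simp add: good_nth[OF gg x])
        then show ?thesis using ind True by (simp add: Em_def hmap_def)
      next
        case False
        have "Em N ?H ! i = ?H ! (N + i - 1)"
          using False lH by (simp add: Em_def)
        also have "\<dots> = induced_bdry g x (N + i - 1)"
          using good_nth[OF gg x] False by simp
        finally show ?thesis using ind False by (simp add: hmap_def)
      qed
    qed
  qed
qed

end
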